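(* Assume $\omega_\ell>0$, $\sum_\ell\omega_\ell=1$, $\sum_\ell\omega_\ell d_\ell>0$, and that for a constant $c_1\ge1$, $\|\omega\|_\infty\sum_\ell\sum_{j\in J}p^{(\ell)}_{ij}\le c_1\sum_\ell\sum_{j\in J}\omega_\ell p^{(\ell)}_{ij}$ for all $i\in[n]$, $J\subseteq[n]$. Fix $\alpha>0$ and $r\ge1$. Then there is a constant $C=C(c_1)$ such that with probability at least $1-n^{-r}$: for every $m\in[n]$ with $\sqrt{m/n}\le\alpha$ and every $I,J\subseteq[n]$ with $|I|=|J|=m$, all but at most $m\|\omega\|_\infty/(\alpha\sum_\ell\omega_\ell d_\ell)$ indices $i\in I$ satisfy $\sum_{j\in J}\bar A_{ij}\le Cr\alpha\sum_\ell\omega_\ell d_\ell$.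
   Context: Here $A^{(1)},\dots,A^{(L)}$ are random $n\times n$ matrices whose entries $A^{(\ell)}_{ij}\sim\mathrm{Bern}(p^{(\ell)}_{ij})$, $i,j\in[n]$, $\ell\in[L]$, are all mutually independent (no symmetry imposed). $\bar A=\sum_\ell\omega_\ell A^{(\ell)}$, $d_\ell=\max_{i,j}np^{(\ell)}_{ij}$, $\|\omega\|_\infty=\max_\ell\omega_\ell$. *)

theory Defs
  imports "HOL-Probability.Probability"
begin

text \<open>Layers are indexed by l < L, vertices by i, j < n.
  p l i j is the Bernoulli parameter of entry (i,j) of the l-th matrix.
  A sample is a function A :: nat \<times> nat \<times> nat \<Rightarrow> bool, with A (l,i,j) = A^(l)_ij.\<close>

definition dmax :: "nat \<Rightarrow> (nat \<Rightarrow> nat \<Rightarrow> nat \<Rightarrow> real) \<Rightarrow> nat \<Rightarrow> real" where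
  "dmax n p l = Max {real n * p l i j | i j. i < n \<and> j < n}"

definition winf :: "nat \<Rightarrow> (nat \<Rightarrow> real) \<Rightarrow> real" where
  "winf L \<omega> = Max (\<omega> ` {..<L})"

definition Abar :: "nat \<Rightarrow> (nat \<Rightarrow> real) \<Rightarrow> (nat \<times> nat \<times> nat \<Rightarrow> bool) \<Rightarrow> nat \<Rightarrow> nat \<Rightarrow> real" where
  "Abar L \<omega> A i j = (\<Sum>l<L. \<omega> l * (if A (l, i, j) then 1 else 0))"

definition multilayer_pmf :: "nat \<Rightarrow> nat \<Rightarrow> (nat \<Rightarrow> nat \<Rightarrow> nat \<Rightarrow> real) \<Rightarrow> (nat \<times> nat \<times> nat \<Rightarrow> bool) pmf" where
  "multilayer_pmf L n p =
     Pi_pmf ({..<L} \<times> {..<n} \<times> {..<n}) False (\<lambda>(l, i, j). bernoulli_pmf (p l i j))"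

end

theory Submission
  imports Defs
begin


lemma exp_convex_bound:
  fixes s c :: real assumes "0 \<le> c" "c \<le> 1"
  shows "exp (s * c) \<le> 1 + c * (exp s - 1)"
proof -
  have "exp ((1 - c) *\<^sub>R 0 + c *\<^sub>R s) \<le> (1 - c) * exp 0 + c * exp s"
    using convex_onD[OF exp_convex, of c 0 s] assms by auto
  thus ?thesis by (simp add: algebra_simps)
qed

lemma chernoff:
  fixes X :: "'a set" and c q :: "'a \<Rightarrow> real" and s \<tau> :: real
  assumes fin: "finite X" and c: "\<And>x. x \<in> X \<Longrightarrow> 0 \<le> c x \<and> c x \<le> 1"
    and q: "\<And>x. x \<in> X \<Longrightarrow> 0 \<le> q x \<and> q x \<le> 1" and s: "s \<ge> 0"
  shows "measure_pmf.prob (Pi_pmf X False (\<lambda>x. bernoulli_pmf (q x)))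
           {A. \<tau> \<le> (\<Sum>x\<in>X. c x * (if A x then 1 else 0))}
         \<le> exp (- s * \<tau> + (exp s - 1) * (\<Sum>x\<in>X. c x * q x))"
proof -
  define M where "M = Pi_pmf X False (\<lambda>x. bernoulli_pmf (q x))"
  define S where "S = (\<lambda>A. (\<Sum>x\<in>X. c x * (if A x then 1 else 0::real)))"
  define E where "E = {A. \<tau> \<le> S A}"
  define F where "F = (\<lambda>A. exp (s * S A - s * \<tau>))"
  have Sle: "S A \<le> (\<Sum>x\<in>X. c x)" for A
    unfolding S_def by (rule sum_mono) (use c in auto)
  have intF: "integrable M F"
  proof (rule measure_pmf.integrable_const_bound[where B = "exp (s * (\<Sum>x\<in>X. c x) - s * \<tau>)"])
    show "AE x in measure_pmf M. norm (F x) \<le> exp (s * (\<Sum>x\<in>X. c x) - s * \<tau>)"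
      using Sle s by (auto simp: F_def intro!: mult_left_mono)
  qed simp
  have "measure_pmf.prob M E = measure_pmf.expectation M (indicator E)"
    by simp
  also have "\<dots> \<le> measure_pmf.expectation M F"
  proof (rule integral_mono)
    show "integrable (measure_pmf M) (indicator E :: _ \<Rightarrow> real)"
      by (rule measure_pmf.integrable_const_bound[where B = 1]) (auto simp: indicator_def)
    show "integrable (measure_pmf M) F" by (rule intF)
    fix A show "indicator E A \<le> F A"
    proof (cases "A \<in> E")
      case True
      hence "0 \<le> s * S A - s * \<tau>" using s by (auto simp: E_def mult_left_mono)
      thus ?thesis using True by (simp add: F_def)
    qed (auto simp: F_def)
  qed
  also have "F = (\<lambda>A. exp (- s * \<tau>) * (\<Prod>x\<in>X. exp (s * c x * (if A x then 1 else 0))))"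
    by (auto simp: F_def S_def exp_sum[OF fin, symmetric] exp_add[symmetric] sum_distrib_left
             intro!: ext arg_cong[where f = exp] sum.cong)
  also have "measure_pmf.expectation M \<dots> = exp (- s * \<tau>) *
      measure_pmf.expectation M (\<lambda>A. \<Prod>x\<in>X. exp (s * c x * (if A x then 1 else 0)))"
    by simp
  also have "measure_pmf.expectation M (\<lambda>A. \<Prod>x\<in>X. exp (s * c x * (if A x then 1 else 0))) =
      (\<Prod>x\<in>X. measure_pmf.expectation (bernoulli_pmf (q x)) (\<lambda>v. exp (s * c x * (if v then 1 else 0))))"
    unfolding M_def
    by (rule expectation_prod_Pi_pmf[OF fin, where f = "\<lambda>x v. exp (s * c x * (if v then 1 else 0))"])
       (auto intro!: integrable_measure_pmf_finite)
  also have "\<dots> \<le> (\<Prod>x\<in>X. exp (q x * c x * (exp s - 1)))"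
  proof (rule prod_mono, safe)
    fix x assume x: "x \<in> X"
    have e: "measure_pmf.expectation (bernoulli_pmf (q x)) (\<lambda>v. exp (s * c x * (if v then 1 else 0)))
        = exp (s * c x) * q x + (1 - q x)"
      using q[OF x] by simp
    show "0 \<le> measure_pmf.expectation (bernoulli_pmf (q x)) (\<lambda>v. exp (s * c x * (if v then 1 else 0)))"
      unfolding e using q[OF x] by auto
    have "exp (s * c x) * q x + (1 - q x) \<le> (1 + c x * (exp s - 1)) * q x + (1 - q x)"
      using exp_convex_bound[of "c x" s] c[OF x] q[OF x] by (auto intro: mult_right_mono)
    also have "\<dots> = 1 + q x * c x * (exp s - 1)" by (simp add: algebra_simps)
    also have "\<dots> \<le> exp (q x * c x * (exp s - 1))" by (rule exp_ge_add_one_self)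
    finally show "measure_pmf.expectation (bernoulli_pmf (q x)) (\<lambda>v. exp (s * c x * (if v then 1 else 0)))
        \<le> exp (q x * c x * (exp s - 1))" unfolding e .
  qed
  also have "\<dots> = exp ((exp s - 1) * (\<Sum>x\<in>X. c x * q x))"
    by (simp add: exp_sum[OF fin, symmetric] sum_distrib_left algebra_simps)
  finally have "measure_pmf.prob M E \<le> exp (- s * \<tau>) * exp ((exp s - 1) * (\<Sum>x\<in>X. c x * q x))"
    by (simp add: mult_left_mono)
  thus ?thesis by (simp add: M_def E_def S_def exp_add[symmetric])
qed



lemma pow_fact_le_exp:
  fixes x :: real assumes "0 \<le> x" shows "x ^ k / fact k \<le> exp x"
proof -
  have "(\<Sum>n\<in>{k}. x ^ n /\<^sub>R fact n) \<le> (\<Sum>n. x ^ n /\<^sub>R fact n)"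
    by (rule sum_le_suminf[OF summable_exp_generic]) (use assms in auto)
  also have "(\<Sum>n. x ^ n /\<^sub>R fact n) = exp x" by (rule sums_unique[OF exp_converges, symmetric])
  finally show ?thesis by (simp add: divide_inverse mult.commute)
qed

lemma choose_bound:
  assumes "1 \<le> m" "m \<le> n"
  shows "real (n choose m) \<le> exp (real m * (1 + ln (real n / real m)))"
proof -
  have "(n choose m) * fact m = fact n div fact (n - m)"
    using binomial_fact_lemma[OF assms(2)]
    by (metis div_mult_self1_is_m fact_gt_zero mult.commute mult.assoc)
  also have "\<dots> \<le> n ^ m" by (rule fact_div_fact_le_pow[OF assms(2)])
  finally have "real ((n choose m) * fact m) \<le> real (n ^ m)" by linarith
  hence c: "real (n choose m) * fact m \<le> real n ^ m" by simp
  have f: "real m ^ m / fact m \<le> exp (real m)" by (rule pow_fact_le_exp) simp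
  have mpos: "real m > 0" using assms by simp
  have "real (n choose m) \<le> real n ^ m / fact m"
    using c by (simp add: field_simps)
  also have "\<dots> = (real n / real m) ^ m * (real m ^ m / fact m)"
    using mpos by (simp add: power_divide)
  also have "\<dots> \<le> (real n / real m) ^ m * exp (real m)"
    using f by (intro mult_left_mono) auto
  also have "(real n / real m) ^ m = exp (real m * ln (real n / real m))"
  proof -
    have "exp (real m * ln (real n / real m)) = exp (ln (real n / real m)) ^ m" by (rule exp_of_nat_mult)
    thus ?thesis using mpos assms by simp
  qed
  also have "exp (real m * ln (real n / real m)) * exp (real m) = exp (real m * (1 + ln (real n / real m)))"
    by (simp only: exp_add[symmetric]) (rule arg_cong[where f=exp], simp add: algebra_simps)
  finally show ?thesis .
qed

lemma final_num:
  fixes r :: real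
  assumes "1 \<le> m" "m \<le> n" "r \<ge> 1"
  shows "real (n choose m) * real (n choose m) * 2 ^ m * exp (- (8 * r * real m * (1 + ln (real n / real m) / 2)))
         \<le> real n powr (- r) / real n"
proof -
  define l where "l = ln (real n / real m)"
  have mpos: "real m \<ge> 1" using assms by simp
  have npos: "real n > 0" using assms by simp
  have l0: "l \<ge> 0" unfolding l_def using assms by (simp add: divide_simps)
  have lnn: "ln (real n) = l + ln (real m)" unfolding l_def using assms by (simp add: ln_div)
  have lnm: "ln (real m) \<le> real m" using ln_le_minus_one[of "real m"] mpos by simp
  have ln2: "ln (2::real) \<le> 1" using ln_le_minus_one[of 2] by simp
  have cb: "real (n choose m) \<le> exp (real m * (1 + l))" using choose_bound[OF assms(1,2)] l_def by simp
  have "real (n choose m) * real (n choose m) * 2 ^ m * exp (- (8 * r * real m * (1 + l / 2)))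
       \<le> exp (real m * (1 + l)) * exp (real m * (1 + l)) * exp (real m * ln 2) * exp (- (8 * r * real m * (1 + l / 2)))"
  proof -
    have "exp (real m * ln 2) = exp (ln 2) ^ m" by (rule exp_of_nat_mult)
    hence e2: "exp (real m * ln 2) = 2 ^ m" by simp
    show ?thesis unfolding e2 using cb by (intro mult_mono) auto
  qed
  also have "\<dots> = exp (2 * real m * (1 + l) + real m * ln 2 - 8 * r * real m * (1 + l / 2))"
    by (simp only: exp_add[symmetric]) (rule arg_cong[where f=exp], simp add: algebra_simps)
  also have "\<dots> \<le> exp (- (r + 1) * ln (real n))"
  proof (subst exp_le_cancel_iff)
    have a1: "r * ln (real m) \<le> r * real m" using lnm assms by (intro mult_left_mono) auto
    have a4: "l \<le> real m * l" using l0 mpos mult_right_mono[of 1 "real m" l] by simp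
    have a3: "r * l \<le> r * real m * l" using mult_left_mono[OF a4, of r] assms by (simp add: mult.assoc)
    have a5: "real m \<le> r * real m" using assms mpos by simp
    have a6: "real m * l \<le> r * (real m * l)" using assms mpos l0 mult_right_mono[of 1 r "real m * l"] by simp
    have a7: "real m * ln 2 \<le> real m" using ln2 mpos by simp
    have a8: "0 \<le> r * real m" using assms mpos by simp
    show "2 * real m * (1 + l) + real m * ln 2 - 8 * r * real m * (1 + l / 2) \<le> - (r + 1) * ln (real n)"
      unfolding lnn using a1 a3 a4 a5 a6 a7 a8 lnm by (simp add: algebra_simps)
  qed
  also have "\<dots> = real n powr (- r) / real n"
  proof -
    have "exp (- (r + 1) * ln (real n)) = exp (- r * ln (real n)) * exp (- ln (real n))"
      by (simp only: exp_add[symmetric]) (rule arg_cong[where f=exp], simp add: algebra_simps)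
    also have "\<dots> = real n powr (- r) / real n" using npos by (simp add: powr_def exp_minus field_simps)
    finally show ?thesis .
  qed
  finally show ?thesis by (simp add: l_def)
qed



lemma sum_restr: "B \<subseteq> A \<Longrightarrow> finite A \<Longrightarrow> (\<Sum>x\<in>A. if x \<in> B then g x else 0) = sum g (B::'a set)"
  by (simp add: sum.inter_restrict[symmetric] Int_absorb1)

lemma sum_conv:
  fixes w :: "nat \<Rightarrow> nat \<Rightarrow> nat \<Rightarrow> real"
  assumes B: "B \<subseteq> {..<n}" and J: "J \<subseteq> {..<n}"
  shows "(\<Sum>x\<in>{..<L} \<times> {..<n} \<times> {..<n}. (case x of (l,i,j) \<Rightarrow> if i\<in>B \<and> j\<in>J then w l i j else 0))
         = (\<Sum>i\<in>B. \<Sum>j\<in>J. \<Sum>l<L. w l i j)"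
proof -
  have "(\<Sum>x\<in>{..<L} \<times> {..<n} \<times> {..<n}. (case x of (l,i,j) \<Rightarrow> if i\<in>B \<and> j\<in>J then w l i j else 0))
     = (\<Sum>l<L. \<Sum>i<n. \<Sum>j<n. if i\<in>B \<and> j\<in>J then w l i j else 0)"
    by (simp add: sum.cartesian_product)
  also have "\<dots> = (\<Sum>l<L. \<Sum>i<n. if i \<in> B then (\<Sum>j\<in>J. w l i j) else 0)"
  proof (intro sum.cong refl)
    fix l i show "(\<Sum>j<n. if i\<in>B \<and> j\<in>J then w l i j else 0) = (if i \<in> B then (\<Sum>j\<in>J. w l i j) else 0)"
      by (cases "i \<in> B") (auto simp: sum_restr[OF J])
  qed
  also have "\<dots> = (\<Sum>l<L. \<Sum>i\<in>B. \<Sum>j\<in>J. w l i j)"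
    by (rule sum.cong[OF refl], rule sum_restr[OF B], simp)
  also have "\<dots> = (\<Sum>i\<in>B. \<Sum>l<L. \<Sum>j\<in>J. w l i j)" by (rule sum.swap)
  also have "\<dots> = (\<Sum>i\<in>B. \<Sum>j\<in>J. \<Sum>l<L. w l i j)" by (intro sum.cong refl sum.swap)
  finally show ?thesis .
qed



lemma event_bound:
  fixes n L m :: nat and \<omega> dl :: "nat \<Rightarrow> real" and p :: "nat \<Rightarrow> nat \<Rightarrow> nat \<Rightarrow> real"
    and W D \<alpha> r :: real and B J :: "nat set"
  assumes W: "W > 0" and \<omega>W: "\<And>l. l < L \<Longrightarrow> 0 < \<omega> l \<and> \<omega> l \<le> W"
   and p: "\<And>l i j. l < L \<Longrightarrow> i < n \<Longrightarrow> j < n \<Longrightarrow> 0 \<le> p l i j \<and> p l i j \<le> 1 \<and> real n * p l i j \<le> dl l"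
   and Ddef: "D = (\<Sum>l<L. \<omega> l * dl l)" and D0: "D > 0"
   and m: "1 \<le> m" "m \<le> n" and \<alpha>: "sqrt (real m / real n) \<le> \<alpha>" and \<alpha>0: "\<alpha> > 0"
   and r: "r \<ge> 1"
   and B: "B \<subseteq> {..<n}" and J: "J \<subseteq> {..<n}" and cJ: "card J = m"
   and Bc: "real m * W / (\<alpha> * D) < real (card B)"
  shows "measure_pmf.prob (multilayer_pmf L n p)
     {A. real (card B) * (8 * r * \<alpha> * D) / W \<le> (\<Sum>x\<in>{..<L}\<times>{..<n}\<times>{..<n}.
          (case x of (l,i,j) \<Rightarrow> if i\<in>B \<and> j\<in>J then \<omega> l / W else 0) * (if A x then 1 else 0))}
     \<le> exp (- (8 * r * real m * (1 + ln (real n / real m) / 2)))"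
proof -
  define X where "X = {..<L}\<times>{..<n}\<times>{..<n}"
  define c where "c = (\<lambda>x. case x of (l,i,j) \<Rightarrow> if i\<in>B \<and> j\<in>J then \<omega> l / W else (0::real))"
  define q where "q = (\<lambda>x. case x of (l::nat,i::nat,j::nat) \<Rightarrow> p l i j)"
  define s where "s = 2 + ln (real n / real m) / 2"
  define \<tau> where "\<tau> = real (card B) * (8 * r * \<alpha> * D) / W"
  define b where "b = real (card B)"
  have mpos: "real m \<ge> 1" using m by simp
  have npos: "real n \<ge> 1" using m by simp
  have pmf: "multilayer_pmf L n p = Pi_pmf X False (\<lambda>x. bernoulli_pmf (q x))"
    unfolding multilayer_pmf_def X_def q_def
    by (intro arg_cong[where f = "Pi_pmf _ _"] ext) (auto split: prod.splits)
  have s0: "s \<ge> 0" unfolding s_def using m by (simp add: divide_simps)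
  have ch: "measure_pmf.prob (Pi_pmf X False (\<lambda>x. bernoulli_pmf (q x)))
           {A. \<tau> \<le> (\<Sum>x\<in>X. c x * (if A x then 1 else 0))}
         \<le> exp (- s * \<tau> + (exp s - 1) * (\<Sum>x\<in>X. c x * q x))"
  proof (rule chernoff)
    show "finite X" by (simp add: X_def)
    fix x assume "x \<in> X"
    then obtain l i j where x: "x = (l,i,j)" "l < L" "i < n" "j < n" by (auto simp: X_def)
    show "0 \<le> c x \<and> c x \<le> 1" using \<omega>W[OF x(2)] W by (auto simp: c_def x)
    show "0 \<le> q x \<and> q x \<le> 1" using p[OF x(2-4)] by (auto simp: q_def x)
  qed (rule s0)
  have cq: "(\<Sum>x\<in>X. c x * q x) = (\<Sum>i\<in>B. \<Sum>j\<in>J. \<Sum>l<L. \<omega> l / W * p l i j)"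
  proof -
    have "(\<Sum>x\<in>X. c x * q x) = (\<Sum>x\<in>X. (case x of (l,i,j) \<Rightarrow> if i\<in>B \<and> j\<in>J then \<omega> l / W * p l i j else 0))"
      by (intro sum.cong refl) (auto simp: c_def q_def split: prod.splits)
    also have "\<dots> = (\<Sum>i\<in>B. \<Sum>j\<in>J. \<Sum>l<L. \<omega> l / W * p l i j)"
      unfolding X_def by (rule sum_conv[OF B J])
    finally show ?thesis .
  qed
  have inner: "(\<Sum>l<L. \<omega> l / W * p l i j) \<le> D / (real n * W)" if "i \<in> B" "j \<in> J" for i j
  proof -
    have "(\<Sum>l<L. \<omega> l / W * p l i j) \<le> (\<Sum>l<L. \<omega> l * dl l / (real n * W))"
    proof (rule sum_mono)
      fix l assume "l \<in> {..<L}"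
      hence l: "l < L" by simp
      have pl: "p l i j \<le> dl l / real n" using p[OF l] that B J npos by (auto simp: field_simps)
      have "\<omega> l / W * p l i j \<le> \<omega> l / W * (dl l / real n)"
        using \<omega>W[OF l] W pl by (intro mult_left_mono) auto
      thus "\<omega> l / W * p l i j \<le> \<omega> l * dl l / (real n * W)" by (simp add: mult.commute)
    qed
    also have "\<dots> = D / (real n * W)" by (simp add: Ddef sum_divide_distrib)
    finally show ?thesis .
  qed
  have cq0: "0 \<le> (\<Sum>x\<in>X. c x * q x)"
  proof (rule sum_nonneg)
    fix x assume "x \<in> X"
    then obtain l i j where x: "x = (l,i,j)" "l < L" "i < n" "j < n" by (auto simp: X_def)
    show "0 \<le> c x * q x" using \<omega>W[OF x(2)] W p[OF x(2-4)] by (auto simp: c_def q_def x)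
  qed
  define Q where "Q = b * real m * (D / (real n * W))"
  have cqQ: "(\<Sum>x\<in>X. c x * q x) \<le> Q"
  proof -
    have "(\<Sum>i\<in>B. \<Sum>j\<in>J. \<Sum>l<L. \<omega> l / W * p l i j) \<le> (\<Sum>i\<in>B. real m * (D / (real n * W)))"
    proof (rule sum_mono)
      fix i assume i: "i \<in> B"
      have "(\<Sum>j\<in>J. \<Sum>l<L. \<omega> l / W * p l i j) \<le> real (card J) * (D / (real n * W))"
        by (rule sum_bounded_above) (use inner i in auto)
      thus "(\<Sum>j\<in>J. \<Sum>l<L. \<omega> l / W * p l i j) \<le> real m * (D / (real n * W))" by (simp add: cJ)
    qed
    thus ?thesis by (simp add: cq Q_def b_def)
  qed
  define \<beta> where "\<beta> = b * \<alpha> * D / W"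
  have \<beta>m: "real m < \<beta>"
  proof -
    have "real m * W / (\<alpha> * D) * (\<alpha> * D / W) < b * (\<alpha> * D / W)"
      using Bc W D0 \<alpha>0 by (intro mult_strict_right_mono) (auto simp: b_def)
    thus ?thesis using W D0 \<alpha>0 by (simp add: \<beta>_def field_simps)
  qed
  have \<tau>\<beta>: "\<tau> = 8 * r * \<beta>" by (simp add: \<tau>_def \<beta>_def b_def)
  have sq: "exp (ln (real n / real m) / 2) = sqrt (real n / real m)"
    using mpos npos by (simp add: powr_half_sqrt[symmetric] powr_def)
  have es: "exp s = exp 2 * sqrt (real n / real m)" unfolding s_def by (simp add: exp_add sq)
  have sqrel: "sqrt (real n / real m) * (real m / real n) = sqrt (real m / real n)"
  proof -
    have "sqrt (real n / real m) * (real m / real n) = sqrt (real n / real m) * (sqrt (real m / real n) * sqrt (real m / real n))"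
      using mpos npos by simp
    also have "\<dots> = (sqrt (real n / real m) * sqrt (real m / real n)) * sqrt (real m / real n)"
      by (simp only: mult.assoc)
    also have "sqrt (real n / real m) * sqrt (real m / real n) = 1"
    proof -
      have "(real n / real m) * (real m / real n) = 1" using mpos npos by simp
      thus ?thesis by (metis real_sqrt_mult real_sqrt_one)
    qed
    finally show ?thesis by simp
  qed
  have e2: "exp (2::real) \<le> 8"
  proof -
    have "exp (2::real) = exp 1 * exp 1" by (simp add: exp_add[symmetric])
    also have "\<dots> \<le> (272/100) * (272/100)" using e_less_272 by (intro mult_mono) auto
    finally show ?thesis by simp
  qed
  have b1: "(exp s - 1) * (\<Sum>x\<in>X. c x * q x) \<le> exp s * Q"
  proof -
    have "(exp s - 1) * (\<Sum>x\<in>X. c x * q x) \<le> exp s * (\<Sum>x\<in>X. c x * q x)"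
      using cq0 by (simp add: algebra_simps)
    also have "\<dots> \<le> exp s * Q" using cqQ by (intro mult_left_mono) auto
    finally show ?thesis .
  qed
  have b2: "exp s * Q \<le> exp 2 * \<beta>"
  proof -
    have "exp s * Q = exp 2 * \<beta> * ((sqrt (real n / real m) * (real m / real n)) / \<alpha>)"
      unfolding es Q_def \<beta>_def using W D0 \<alpha>0 mpos npos by (simp add: field_simps)
    also have "\<dots> \<le> exp 2 * \<beta> * 1"
    proof (rule mult_left_mono)
      show "sqrt (real n / real m) * (real m / real n) / \<alpha> \<le> 1" unfolding sqrel using \<alpha> \<alpha>0 by simp
      show "0 \<le> exp 2 * \<beta>" using \<beta>m by simp
    qed
    finally show ?thesis by simp
  qed
  have b3: "exp 2 * \<beta> \<le> 8 * r * \<beta>"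
    using e2 r \<beta>m by (intro mult_right_mono) auto
  have expo: "- s * \<tau> + (exp s - 1) * (\<Sum>x\<in>X. c x * q x) \<le> - (8 * r * real m * (1 + ln (real n / real m) / 2))"
  proof -
    have s1: "s - 1 = 1 + ln (real n / real m) / 2" by (simp add: s_def)
    have "- s * \<tau> + (exp s - 1) * (\<Sum>x\<in>X. c x * q x) \<le> - s * (8 * r * \<beta>) + 8 * r * \<beta>"
      using b1 b2 b3 \<tau>\<beta> by simp
    also have "\<dots> = - (8 * r) * (s - 1) * \<beta>" by (simp add: algebra_simps)
    also have "\<dots> \<le> - (8 * r) * (s - 1) * real m"
    proof -
      have ln0: "ln (real n / real m) \<ge> 0" using mpos npos m by simp
      have "0 \<le> (8 * r) * (s - 1)" unfolding s1 using ln0 r by simp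
      hence "(8 * r) * (s - 1) * real m \<le> (8 * r) * (s - 1) * \<beta>"
        using \<beta>m by (intro mult_left_mono) auto
      thus ?thesis by simp
    qed
    finally show ?thesis unfolding s1 by (simp add: algebra_simps)
  qed
  have "measure_pmf.prob (multilayer_pmf L n p) {A. \<tau> \<le> (\<Sum>x\<in>X. c x * (if A x then 1 else 0))}
      \<le> exp (- (8 * r * real m * (1 + ln (real n / real m) / 2)))"
    unfolding pmf using ch expo by (meson exp_le_cancel_iff order_trans)
  thus ?thesis by (simp add: \<tau>_def X_def c_def)
qed



lemma prob_UN_le:
  assumes "finite K"
  shows "measure_pmf.prob M (\<Union>k\<in>K. F k) \<le> (\<Sum>k\<in>K. measure_pmf.prob M (F k))"
  by (rule measure_pmf.finite_measure_subadditive_finite) (use assms in auto)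

theorem mainTheorem13:
  fixes c1 :: real
  assumes "c1 \<ge> 1"
  shows "\<exists>C>0. \<forall>(n::nat) (L::nat) (\<omega>::nat \<Rightarrow> real) (p::nat \<Rightarrow> nat \<Rightarrow> nat \<Rightarrow> real) (\<alpha>::real) (r::real).
     n \<ge> 1 \<longrightarrow>
     (\<forall>l<L. \<forall>i<n. \<forall>j<n. 0 \<le> p l i j \<and> p l i j \<le> 1) \<longrightarrow>
     (\<forall>l<L. \<omega> l > 0) \<longrightarrow>
     (\<Sum>l<L. \<omega> l) = 1 \<longrightarrow>
     (\<Sum>l<L. \<omega> l * dmax n p l) > 0 \<longrightarrow>
     (\<forall>i<n. \<forall>J. J \<subseteq> {..<n} \<longrightarrow>
        winf L \<omega> * (\<Sum>l<L. \<Sum>j\<in>J. p l i j) \<le> c1 * (\<Sum>l<L. \<Sum>j\<in>J. \<omega> l * p l i j)) \<longrightarrow>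
     \<alpha> > 0 \<longrightarrow> r \<ge> 1 \<longrightarrow>
     measure_pmf.prob (multilayer_pmf L n p)
       {A. \<forall>m. 1 \<le> m \<and> m \<le> n \<and> sqrt (real m / real n) \<le> \<alpha> \<longrightarrow>
             (\<forall>I J. I \<subseteq> {..<n} \<and> J \<subseteq> {..<n} \<and> card I = m \<and> card J = m \<longrightarrow>
                real (card {i\<in>I. \<not> ((\<Sum>j\<in>J. Abar L \<omega> A i j)
                                      \<le> C * r * \<alpha> * (\<Sum>l<L. \<omega> l * dmax n p l))})
                \<le> real m * winf L \<omega> / (\<alpha> * (\<Sum>l<L. \<omega> l * dmax n p l)))}
       \<ge> 1 - real n powr (- r)"
proof (intro exI[of _ 8] conjI allI impI)
  show "(0::real) < 8" by simp
  fix n L :: nat and \<omega> :: "nat \<Rightarrow> real" and p :: "nat \<Rightarrow> nat \<Rightarrow> nat \<Rightarrow> real" and \<alpha> r :: real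
  assume n1: "n \<ge> 1"
    and prange: "\<forall>l<L. \<forall>i<n. \<forall>j<n. 0 \<le> p l i j \<and> p l i j \<le> 1"
    and \<omega>pos: "\<forall>l<L. \<omega> l > 0"
    and \<omega>sum: "(\<Sum>l<L. \<omega> l) = 1"
    and Dpos: "(\<Sum>l<L. \<omega> l * dmax n p l) > 0"
    and c1c: "\<forall>i<n. \<forall>J. J \<subseteq> {..<n} \<longrightarrow>
        winf L \<omega> * (\<Sum>l<L. \<Sum>j\<in>J. p l i j) \<le> c1 * (\<Sum>l<L. \<Sum>j\<in>J. \<omega> l * p l i j)"
    and \<alpha>0: "\<alpha> > 0" and r1: "r \<ge> 1"
  define W where "W = winf L \<omega>"
  define dl where "dl = dmax n p"
  define D where "D = (\<Sum>l<L. \<omega> l * dl l)"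
  define X where "X = {..<L}\<times>{..<n}\<times>{..<n}"
  have D0: "D > 0" using Dpos by (simp add: D_def dl_def)
  have L0: "L > 0" using D0 by (cases L) (auto simp: D_def)
  have \<omega>W: "\<omega> l \<le> W" if "l < L" for l
    unfolding W_def winf_def by (rule Max_ge) (use that in auto)
  have W0: "W > 0" using \<omega>W[OF L0] \<omega>pos L0 by force
  have pdl: "real n * p l i j \<le> dl l" if "l < L" "i < n" "j < n" for l i j
  proof -
    have eq: "{real n * p l i j |i j. i < n \<and> j < n} = (\<lambda>(i,j). real n * p l i j) ` ({..<n} \<times> {..<n})"
      by auto
    show ?thesis unfolding dl_def dmax_def eq by (rule Max_ge) (use that in auto)
  qed
  define Good where "Good = {A. \<forall>m. 1 \<le> m \<and> m \<le> n \<and> sqrt (real m / real n) \<le> \<alpha> \<longrightarrow>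
             (\<forall>I J. I \<subseteq> {..<n} \<and> J \<subseteq> {..<n} \<and> card I = m \<and> card J = m \<longrightarrow>
                real (card {i\<in>I. \<not> ((\<Sum>j\<in>J. Abar L \<omega> A i j) \<le> 8 * r * \<alpha> * D)})
                \<le> real m * W / (\<alpha> * D))}"
  define Ms where "Ms = {m \<in> {1..n}. sqrt (real m / real n) \<le> \<alpha>}"
  define Sm where "Sm = (\<lambda>m. {I. I \<subseteq> {..<n} \<and> card I = m})"
  define Bs where "Bs = (\<lambda>m (I::nat set). {B. B \<subseteq> I \<and> real m * W / (\<alpha> * D) < real (card B)})"
  define Ev where "Ev = (\<lambda>B J. {A. real (card B) * (8 * r * \<alpha> * D) / W \<le> (\<Sum>x\<in>{..<L}\<times>{..<n}\<times>{..<n}.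
          (case x of (l,i,j) \<Rightarrow> if i\<in>B \<and> j\<in>J then \<omega> l / W else 0) * (if A x then 1 else 0))})"
  define \<rho> where "\<rho> = (\<lambda>m::nat. exp (- (8 * r * real m * (1 + ln (real n / real m) / 2))))"
  define M where "M = multilayer_pmf L n p"
  have sub: "UNIV - Good \<subseteq> (\<Union>m\<in>Ms. \<Union>I\<in>Sm m. \<Union>J\<in>Sm m. \<Union>B\<in>Bs m I. Ev B J)"
  proof
    fix A assume "A \<in> UNIV - Good"
    then obtain m I J where m: "1 \<le> m" "m \<le> n" "sqrt (real m / real n) \<le> \<alpha>"
      and IJ: "I \<subseteq> {..<n}" "J \<subseteq> {..<n}" "card I = m" "card J = m"
      and bad: "\<not> real (card {i\<in>I. \<not> ((\<Sum>j\<in>J. Abar L \<omega> A i j) \<le> 8 * r * \<alpha> * D)}) \<le> real m * W / (\<alpha> * D)"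
      unfolding Good_def by blast
    define Bad where "Bad = {i\<in>I. \<not> ((\<Sum>j\<in>J. Abar L \<omega> A i j) \<le> 8 * r * \<alpha> * D)}"
    have BadI: "Bad \<subseteq> I" by (auto simp: Bad_def)
    have BadB: "Bad \<in> Bs m I" using bad BadI by (auto simp: Bs_def Bad_def)
    have sumBad: "real (card Bad) * (8 * r * \<alpha> * D) \<le> (\<Sum>i\<in>Bad. \<Sum>j\<in>J. Abar L \<omega> A i j)"
      by (rule sum_bounded_below) (auto simp: Bad_def)
    have conv: "(\<Sum>x\<in>{..<L}\<times>{..<n}\<times>{..<n}.
          (case x of (l,i,j) \<Rightarrow> if i\<in>Bad \<and> j\<in>J then \<omega> l / W else 0) * (if A x then 1 else 0))
        = (\<Sum>i\<in>Bad. \<Sum>j\<in>J. Abar L \<omega> A i j) / W"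
    proof -
      have "(\<Sum>x\<in>{..<L}\<times>{..<n}\<times>{..<n}.
          (case x of (l,i,j) \<Rightarrow> if i\<in>Bad \<and> j\<in>J then \<omega> l / W else 0) * (if A x then 1 else 0))
        = (\<Sum>x\<in>{..<L}\<times>{..<n}\<times>{..<n}. (case x of (l,i,j) \<Rightarrow> if i\<in>Bad \<and> j\<in>J then
              \<omega> l / W * (if A (l,i,j) then 1 else 0) else 0))"
        by (intro sum.cong refl) (auto split: prod.splits)
      also have "\<dots> = (\<Sum>i\<in>Bad. \<Sum>j\<in>J. \<Sum>l<L. \<omega> l / W * (if A (l,i,j) then 1 else 0))"
        by (rule sum_conv) (use BadI IJ in auto)
      also have "\<dots> = (\<Sum>i\<in>Bad. \<Sum>j\<in>J. Abar L \<omega> A i j / W)"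
        by (simp add: Abar_def sum_divide_distrib)
      also have "\<dots> = (\<Sum>i\<in>Bad. \<Sum>j\<in>J. Abar L \<omega> A i j) / W"
        by (simp add: sum_divide_distrib)
      finally show ?thesis .
    qed
    have "A \<in> Ev Bad J"
      unfolding Ev_def mem_Collect_eq conv using sumBad W0 by (intro divide_right_mono) auto
    moreover have "m \<in> Ms" using m by (simp add: Ms_def)
    moreover have "I \<in> Sm m" "J \<in> Sm m" using IJ by (auto simp: Sm_def)
    ultimately show "A \<in> (\<Union>m\<in>Ms. \<Union>I\<in>Sm m. \<Union>J\<in>Sm m. \<Union>B\<in>Bs m I. Ev B J)" using BadB by blast
  qed
  have finSm: "finite (Sm m)" for m
    by (rule finite_subset[of _ "Pow {..<n}"]) (auto simp: Sm_def)
  have cardSm: "card (Sm m) = n choose m" for m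
    unfolding Sm_def using n_subsets[of "{..<n}" m] by simp
  have evb: "measure_pmf.prob M (Ev B J) \<le> \<rho> m"
    if "m \<in> Ms" "I \<in> Sm m" "J \<in> Sm m" "B \<in> Bs m I" for m I J B
  proof -
    have m: "1 \<le> m" "m \<le> n" "sqrt (real m / real n) \<le> \<alpha>" using that(1) by (auto simp: Ms_def)
    show ?thesis unfolding M_def Ev_def \<rho>_def
    proof (rule event_bound[where dl = dl])
      show "\<And>l. l < L \<Longrightarrow> 0 < \<omega> l \<and> \<omega> l \<le> W" using \<omega>pos \<omega>W by auto
      show "\<And>l i j. l < L \<Longrightarrow> i < n \<Longrightarrow> j < n \<Longrightarrow> 0 \<le> p l i j \<and> p l i j \<le> 1 \<and> real n * p l i j \<le> dl l"
        using prange pdl by auto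
      show "B \<subseteq> {..<n}" using that(2,4) by (auto simp: Sm_def Bs_def)
      show "J \<subseteq> {..<n}" "card J = m" using that(3) by (auto simp: Sm_def)
      show "real m * W / (\<alpha> * D) < real (card B)" using that(4) by (auto simp: Bs_def)
    qed (use W0 D0 m \<alpha>0 r1 D_def in auto)
  qed
  have perm: "measure_pmf.prob M (\<Union>I\<in>Sm m. \<Union>J\<in>Sm m. \<Union>B\<in>Bs m I. Ev B J)
      \<le> real (n choose m) * real (n choose m) * 2 ^ m * \<rho> m" if mM: "m \<in> Ms" for m
  proof -
    have \<rho>0: "\<rho> m \<ge> 0" by (simp add: \<rho>_def)
    have inner: "measure_pmf.prob M (\<Union>B\<in>Bs m I. Ev B J) \<le> 2 ^ m * \<rho> m" if "I \<in> Sm m" "J \<in> Sm m" for I J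
    proof -
      have finI: "finite I" using that(1) by (auto simp: Sm_def intro: finite_subset)
      have BsP: "Bs m I \<subseteq> Pow I" by (auto simp: Bs_def)
      have finB: "finite (Bs m I)" using finI BsP finite_subset by blast
      have cB: "card (Bs m I) \<le> 2 ^ m"
        using card_mono[OF _ BsP] finI card_Pow[of I] that(1) by (auto simp: Sm_def)
      have "measure_pmf.prob M (\<Union>B\<in>Bs m I. Ev B J) \<le> (\<Sum>B\<in>Bs m I. measure_pmf.prob M (Ev B J))"
        by (rule prob_UN_le[OF finB])
      also have "\<dots> \<le> (\<Sum>B\<in>Bs m I. \<rho> m)" by (rule sum_mono, rule evb[OF mM that]) 
      also have "\<dots> = real (card (Bs m I)) * \<rho> m" by simp
      also have "\<dots> \<le> 2 ^ m * \<rho> m"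
      proof -
        have "real (card (Bs m I)) \<le> real (2 ^ m)" using cB by (rule of_nat_mono)
        hence "real (card (Bs m I)) \<le> 2 ^ m" by simp
        thus ?thesis using \<rho>0 by (rule mult_right_mono)
      qed
      finally show ?thesis .
    qed
    have mid: "measure_pmf.prob M (\<Union>J\<in>Sm m. \<Union>B\<in>Bs m I. Ev B J) \<le> real (n choose m) * (2 ^ m * \<rho> m)"
      if "I \<in> Sm m" for I
    proof -
      have "measure_pmf.prob M (\<Union>J\<in>Sm m. \<Union>B\<in>Bs m I. Ev B J) \<le> (\<Sum>J\<in>Sm m. measure_pmf.prob M (\<Union>B\<in>Bs m I. Ev B J))"
        by (rule prob_UN_le[OF finSm])
      also have "\<dots> \<le> (\<Sum>J\<in>Sm m. 2 ^ m * \<rho> m)" by (rule sum_mono, rule inner[OF that])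
      also have "\<dots> = real (n choose m) * (2 ^ m * \<rho> m)" by (simp add: cardSm)
      finally show ?thesis .
    qed
    have "measure_pmf.prob M (\<Union>I\<in>Sm m. \<Union>J\<in>Sm m. \<Union>B\<in>Bs m I. Ev B J)
        \<le> (\<Sum>I\<in>Sm m. measure_pmf.prob M (\<Union>J\<in>Sm m. \<Union>B\<in>Bs m I. Ev B J))"
      by (rule prob_UN_le[OF finSm])
    also have "\<dots> \<le> (\<Sum>I\<in>Sm m. real (n choose m) * (2 ^ m * \<rho> m))" by (rule sum_mono, rule mid)
    also have "\<dots> = real (n choose m) * real (n choose m) * 2 ^ m * \<rho> m" by (simp add: cardSm)
    finally show ?thesis .
  qed
  have finMs: "finite Ms" by (simp add: Ms_def)
  have cMs: "card Ms \<le> n"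
  proof -
    have "Ms \<subseteq> {1..n}" by (auto simp: Ms_def)
    hence "card Ms \<le> card {1..n}" by (rule card_mono[rotated]) simp
    thus ?thesis by simp
  qed
  have "measure_pmf.prob M (UNIV - Good) \<le> measure_pmf.prob M (\<Union>m\<in>Ms. \<Union>I\<in>Sm m. \<Union>J\<in>Sm m. \<Union>B\<in>Bs m I. Ev B J)"
    by (rule measure_pmf.finite_measure_mono[OF sub]) simp
  also have "\<dots> \<le> (\<Sum>m\<in>Ms. measure_pmf.prob M (\<Union>I\<in>Sm m. \<Union>J\<in>Sm m. \<Union>B\<in>Bs m I. Ev B J))"
    by (rule prob_UN_le[OF finMs])
  also have "\<dots> \<le> (\<Sum>m\<in>Ms. real n powr (- r) / real n)"
  proof (rule sum_mono)
    fix m assume mM: "m \<in> Ms"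
    hence m: "1 \<le> m" "m \<le> n" by (auto simp: Ms_def)
    show "measure_pmf.prob M (\<Union>I\<in>Sm m. \<Union>J\<in>Sm m. \<Union>B\<in>Bs m I. Ev B J) \<le> real n powr (- r) / real n"
      using perm[OF mM] final_num[OF m r1] unfolding \<rho>_def by linarith
  qed
  also have "\<dots> = real (card Ms) * (real n powr (- r) / real n)" by simp
  also have "\<dots> \<le> real n * (real n powr (- r) / real n)"
    using cMs by (intro mult_right_mono) auto
  also have "\<dots> = real n powr (- r)" using n1 by simp
  finally have bnd: "measure_pmf.prob M (UNIV - Good) \<le> real n powr (- r)" .
  have "measure_pmf.prob M (UNIV - Good) = 1 - measure_pmf.prob M Good"
    using measure_pmf.prob_compl[of Good M] by simp
  hence main: "1 - real n powr (- r) \<le> measure_pmf.prob M Good" using bnd by linarith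
  show "1 - real n powr (- r) \<le> measure_pmf.prob (multilayer_pmf L n p)
       {A. \<forall>m. 1 \<le> m \<and> m \<le> n \<and> sqrt (real m / real n) \<le> \<alpha> \<longrightarrow>
             (\<forall>I J. I \<subseteq> {..<n} \<and> J \<subseteq> {..<n} \<and> card I = m \<and> card J = m \<longrightarrow>
                real (card {i\<in>I. \<not> ((\<Sum>j\<in>J. Abar L \<omega> A i j)
                                      \<le> 8 * r * \<alpha> * (\<Sum>l<L. \<omega> l * dmax n p l))})
                \<le> real m * winf L \<omega> / (\<alpha> * (\<Sum>l<L. \<omega> l * dmax n p l)))}"
    using main unfolding M_def Good_def W_def D_def dl_def .
qed

end
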